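(* Suppose that for each Polish space $E$ and each $\mu\in\mathcal P(E)$ we are given a function $\mathcal P(E)\ni\nu\mapsto\alpha(\nu|\mu)\in[0,\infty]$, such that: (1) $\alpha(\mu|\mu)=0$; (2) $\alpha(\nu|\mu)=\infty$ whenever $\nu\in\mathcal P(E)$ is not absolutely continuous with respect to $\mu$; (3) $\alpha(\nu K\,|\,\mu K)\le\alpha(\nu|\mu)$ for all Polish spaces $E,F$, all $\mu,\nu\in\mathcal P(E)$ and every kernel $K$ from $E$ to $F$. For each Polish space $E$ and $\mu\in\mathcal P(E)$ define $$\rho_\mu(f):=\sup_{\nu\in\mathcal P(E)}\left(\int_E f\,d\nu-\alpha(\nu|\mu)\right),\qquad f\in B(E).$$ Then each $\rho_\mu$ is a law invariant risk measure (on $L^\infty(E,\mu)$). Moreover, for any Polish spaces $F$ and $G$, any $\mu\in\mathcal P(F)$, $\nu\in\mathcal P(G)$, and any $f\in B(F)$, $g\in B(G)$ with $\mu\circ f^{-1}=\nu\circ g^{-1}$, we have $\rho_\mu(f)=\rho_\nu(g)$.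
   Context: For a Polish space $E$, $\mathcal P(E)$ is the set of Borel probability measures on $E$ and $B(E)$ the set of bounded Borel functions on $E$. A kernel from $E$ to $F$ (Polish spaces) is a measurable map $E\ni x\mapsto K_x\in\mathcal P(F)$, and $\mu K(\cdot):=\int_E\mu(dx)K_x(\cdot)\in\mathcal P(F)$. A risk measure on $L^\infty(E,\mu)$ is a convex functional that is monotone ($f\le g$ $\mu$-a.e. implies $\rho_\mu(f)\le\rho_\mu(g)$), cash additive ($\rho_\mu(f+c)=\rho_\mu(f)+c$ for constants $c$) and normalized ($\rho_\mu(0)=0$); law invariant means $\rho_\mu(f)=\rho_\mu(g)$ whenever $\mu\circ f^{-1}=\mu\circ g^{-1}$. *)

theory Defs
  imports "HOL-Analysis.Analysis" "HOL-Probability.Probability"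
begin

definition Polish_space :: "'a topology \<Rightarrow> bool" where
  "Polish_space X \<longleftrightarrow> completely_metrizable_space X \<and> separable_space X"

definition borel_of :: "'a topology \<Rightarrow> 'a measure" where
  "borel_of X = sigma (topspace X) {U. openin X U}"

definition Prob :: "'a topology \<Rightarrow> 'a measure set" where
  "Prob X = space (prob_algebra (borel_of X))"

definition bdd_borel :: "'a topology \<Rightarrow> ('a \<Rightarrow> real) set" where
  "bdd_borel X = {f. f \<in> borel_measurable (borel_of X) \<and> bounded (f ` topspace X)}"

definition kernel :: "'a topology \<Rightarrow> 'b topology \<Rightarrow> ('a \<Rightarrow> 'b measure) set" where
  "kernel X Y = borel_of X \<rightarrow>\<^sub>M prob_algebra (borel_of Y)"

definition kcomp :: "'a measure \<Rightarrow> ('a \<Rightarrow> 'b measure) \<Rightarrow> 'b measure" where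
  "kcomp \<mu> K = \<mu> \<bind> K"

definition rho :: "('a topology \<Rightarrow> 'a measure \<Rightarrow> 'a measure \<Rightarrow> ennreal)
    \<Rightarrow> 'a topology \<Rightarrow> 'a measure \<Rightarrow> ('a \<Rightarrow> real) \<Rightarrow> ereal" where
  "rho \<alpha> X \<mu> f = (SUP \<nu>\<in>Prob X. ereal (integral\<^sup>L \<nu> f) - enn2ereal (\<alpha> X \<nu> \<mu>))"

text \<open>A functional on B(E) that is a (real-valued) risk measure on L-infinity(E,mu):
  finite, monotone w.r.t. mu-a.e. order (hence well defined on L-infinity), cash additive,
  normalized and convex.\<close>
definition risk_measure :: "'a topology \<Rightarrow> 'a measure \<Rightarrow> (('a \<Rightarrow> real) \<Rightarrow> ereal) \<Rightarrow> bool" where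
  "risk_measure X \<mu> r \<longleftrightarrow>
     (\<forall>f\<in>bdd_borel X. \<bar>r f\<bar> \<noteq> \<infinity>) \<and>
     (\<forall>f\<in>bdd_borel X. \<forall>g\<in>bdd_borel X. (AE x in \<mu>. f x \<le> g x) \<longrightarrow> r f \<le> r g) \<and>
     (\<forall>f\<in>bdd_borel X. \<forall>c::real. r (\<lambda>x. f x + c) = r f + ereal c) \<and>
     r (\<lambda>x. 0) = 0 \<and>
     (\<forall>f\<in>bdd_borel X. \<forall>g\<in>bdd_borel X. \<forall>t::real. 0 \<le> t \<and> t \<le> 1 \<longrightarrow>
        r (\<lambda>x. t * f x + (1 - t) * g x) \<le> ereal t * r f + ereal (1 - t) * r g)"

definition law_invariant :: "'a topology \<Rightarrow> 'a measure \<Rightarrow> (('a \<Rightarrow> real) \<Rightarrow> ereal) \<Rightarrow> bool" where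
  "law_invariant X \<mu> r \<longleftrightarrow>
     (\<forall>f\<in>bdd_borel X. \<forall>g\<in>bdd_borel X. distr \<mu> borel f = distr \<mu> borel g \<longrightarrow> r f = r g)"

end

theory Submission
  imports Defs
begin

lemma space_borel_of[simp]: "space (borel_of X) = topspace X"
  unfolding borel_of_def by (rule space_measure_of) (auto dest: openin_subset)

lemma ProbD:
  assumes "\<nu> \<in> Prob X"
  shows "prob_space \<nu>" "sets \<nu> = sets (borel_of X)" "space \<nu> = topspace X"
  using assms unfolding Prob_def space_prob_algebra
  by (auto dest: sets_eq_imp_space_eq)

lemma bdd_borelD:
  assumes "f \<in> bdd_borel X"
  shows "f \<in> borel_measurable (borel_of X)" "\<exists>B. \<forall>x\<in>topspace X. \<bar>f x\<bar> \<le> B"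
  using assms unfolding bdd_borel_def bounded_iff by auto

lemma bdd_integrable:
  assumes "f \<in> bdd_borel X" "\<nu> \<in> Prob X"
  shows "integrable \<nu> f"
proof -
  interpret prob_space \<nu> using ProbD[OF assms(2)] by simp
  obtain B where B: "\<forall>x\<in>topspace X. \<bar>f x\<bar> \<le> B" using bdd_borelD[OF assms(1)] by auto
  show ?thesis
  proof (rule integrable_const_bound[where B=B])
    show "AE x in \<nu>. norm (f x) \<le> B" using B ProbD[OF assms(2)] by auto
    show "f \<in> borel_measurable \<nu>"
      using bdd_borelD(1)[OF assms(1)] measurable_cong_sets[OF ProbD(2)[OF assms(2)] refl] by blast
  qed
qed

lemma rho_upper:
  assumes "\<nu> \<in> Prob X"
  shows "ereal (integral\<^sup>L \<nu> f) - enn2ereal (\<alpha> X \<nu> \<mu>) \<le> rho \<alpha> X \<mu> f"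
  unfolding rho_def using assms by (intro SUP_upper) auto

lemma term_cases:
  fixes a :: ennreal
  obtains "a = \<infinity>" "ereal r - enn2ereal a = -\<infinity>"
    | b where "a = ennreal b" "b \<ge> 0" "ereal r - enn2ereal a = ereal (r - b)"
proof (cases a)
  case (real b)
  then show ?thesis using that(2)[of b] by (simp add: enn2ereal_ennreal)
next
  case top
  then show ?thesis using that(1) by simp
qed

lemma rho_mono_gen:
  assumes "\<And>\<nu>. \<nu> \<in> Prob X \<Longrightarrow> \<alpha> X \<nu> \<mu> \<noteq> \<infinity> \<Longrightarrow> integral\<^sup>L \<nu> f \<le> integral\<^sup>L \<nu> g + c"
  shows "rho \<alpha> X \<mu> f \<le> rho \<alpha> X \<mu> g + ereal c"
  unfolding rho_def[of \<alpha> X \<mu> f]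
proof (rule SUP_least)
  fix \<nu> assume nu: "\<nu> \<in> Prob X"
  show "ereal (integral\<^sup>L \<nu> f) - enn2ereal (\<alpha> X \<nu> \<mu>) \<le> rho \<alpha> X \<mu> g + ereal c"
  proof (cases rule: term_cases[of "\<alpha> X \<nu> \<mu>" "integral\<^sup>L \<nu> f"])
    case 1 then show ?thesis by simp
  next
    case (2 b)
    have le: "ereal (integral\<^sup>L \<nu> g - b) \<le> rho \<alpha> X \<mu> g"
      using rho_upper[OF nu, where \<alpha>=\<alpha> and f=g and \<mu>=\<mu>] 2 by (simp add: enn2ereal_ennreal)
    have "integral\<^sup>L \<nu> f - b \<le> (integral\<^sup>L \<nu> g - b) + c" using assms[OF nu] 2 by simp
    then have "ereal (integral\<^sup>L \<nu> f - b) \<le> ereal (integral\<^sup>L \<nu> g - b) + ereal c" by simp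
    also have "\<dots> \<le> rho \<alpha> X \<mu> g + ereal c" using le by (rule add_right_mono)
    finally show ?thesis using 2 by simp
  qed
qed

lemma rho_bounds:
  assumes "\<mu> \<in> Prob X" "\<alpha> X \<mu> \<mu> = 0" "f \<in> bdd_borel X"
  shows "\<exists>r. rho \<alpha> X \<mu> f = ereal r"
proof -
  obtain B where B: "\<forall>x\<in>topspace X. \<bar>f x\<bar> \<le> B" using bdd_borelD[OF assms(3)] by auto
  have lo: "ereal (integral\<^sup>L \<mu> f) \<le> rho \<alpha> X \<mu> f"
    using rho_upper[OF assms(1), where \<alpha>=\<alpha> and f=f and \<mu>=\<mu>] assms(2) by (simp add: zero_ennreal.rep_eq)
  have hi: "rho \<alpha> X \<mu> f \<le> ereal B"
    unfolding rho_def
  proof (rule SUP_least)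
    fix \<nu> assume nu: "\<nu> \<in> Prob X"
    interpret prob_space \<nu> using ProbD[OF nu] by simp
    have "integral\<^sup>L \<nu> f \<le> integral\<^sup>L \<nu> (\<lambda>_. B)"
      using B ProbD[OF nu] bdd_integrable[OF assms(3) nu] by (intro integral_mono) auto
    then have "integral\<^sup>L \<nu> f \<le> B" by (simp add: prob_space)
    then show "ereal (integral\<^sup>L \<nu> f) - enn2ereal (\<alpha> X \<nu> \<mu>) \<le> ereal B"
      by (cases rule: term_cases[of "\<alpha> X \<nu> \<mu>" "integral\<^sup>L \<nu> f"]) auto
  qed
  from lo hi show ?thesis by (cases "rho \<alpha> X \<mu> f") auto
qed

lemma simple_integral:
  assumes "finite_measure M" "h \<in> borel_measurable M" "finite U" "h ` space M \<subseteq> U"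
  shows "integral\<^sup>L M h = (\<Sum>c\<in>U. c * measure M (h -` {c} \<inter> space M))"
proof -
  interpret finite_measure M by fact
  have "integral\<^sup>L M h = integral\<^sup>L M (\<lambda>x. \<Sum>c\<in>U. c * indicator (h -` {c} \<inter> space M) x)"
  proof (rule Bochner_Integration.integral_cong[OF refl])
    fix x assume x: "x \<in> space M"
    then have hx: "h x \<in> U" using assms(4) by auto
    have "(\<Sum>c\<in>U. c * indicator (h -` {c} \<inter> space M) x) = (\<Sum>c\<in>U. if c = h x then c else 0)"
      using x by (intro sum.cong) (auto simp: indicator_def)
    also have "\<dots> = h x" using hx assms(3) by simp
    finally show "h x = (\<Sum>c\<in>U. c * indicator (h -` {c} \<inter> space M) x)" by simp
  qed
  also have "\<dots> = (\<Sum>c\<in>U. integral\<^sup>L M (\<lambda>x. c * indicator (h -` {c} \<inter> space M) x))"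
    using assms(2) by (intro Bochner_Integration.integral_sum integrable_mult_right)
      (auto simp: measurable_sets integrable_indicator_iff Int_absorb2 less_top[symmetric])
  also have "\<dots> = (\<Sum>c\<in>U. c * measure M (h -` {c} \<inter> space M))"
    using assms(2) by (intro sum.cong refl) (simp add: measurable_sets Bochner_Integration.integral_indicator)
  finally show ?thesis .
qed

lemma simple_law_le:
  fixes \<alpha> :: "'a topology \<Rightarrow> 'a measure \<Rightarrow> 'a measure \<Rightarrow> ennreal"
  assumes mu: "\<mu> \<in> Prob F" and nu: "\<nu> \<in> Prob G"
    and ac: "\<And>\<nu>'. \<nu>' \<in> Prob F \<Longrightarrow> \<not> absolutely_continuous \<mu> \<nu>' \<Longrightarrow> \<alpha> F \<nu>' \<mu> = \<infinity>"
    and dpi: "\<And>\<nu>' K. \<nu>' \<in> Prob F \<Longrightarrow> K \<in> kernel F G \<Longrightarrow> \<alpha> G (kcomp \<nu>' K) (kcomp \<mu> K) \<le> \<alpha> F \<nu>' \<mu>"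
    and fm: "f \<in> borel_measurable (borel_of F)" and gm: "g \<in> borel_measurable (borel_of G)"
    and U: "finite U" "f ` topspace F \<subseteq> U" "g ` topspace G \<subseteq> U"
    and law: "distr \<mu> borel f = distr \<nu> borel g"
  shows "rho \<alpha> F \<mu> f \<le> rho \<alpha> G \<nu> g"
proof -
  define S where "S c = g -` {c} \<inter> topspace G" for c
  define R where "R c = f -` {c} \<inter> topspace F" for c
  define Kc where "Kc c = (if emeasure \<nu> (S c) \<noteq> 0 then uniform_measure \<nu> (S c) else \<nu>)" for c
  define K where "K x = Kc (f x)" for x
  interpret nu: prob_space \<nu> using ProbD[OF nu] by simp
  interpret mu: prob_space \<mu> using ProbD[OF mu] by simp
  have S_sets: "S c \<in> sets (borel_of G)" for c
    unfolding S_def using measurable_sets[OF gm, of "{c}"] by simp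
  have R_sets: "R c \<in> sets (borel_of F)" for c
    unfolding R_def using measurable_sets[OF fm, of "{c}"] by simp
  have pR: "emeasure \<mu> (R c) = emeasure \<nu> (S c)" for c
  proof -
    have fm': "f \<in> \<mu> \<rightarrow>\<^sub>M borel" using fm measurable_cong_sets[OF ProbD(2)[OF mu] refl] by blast
    have gm': "g \<in> \<nu> \<rightarrow>\<^sub>M borel" using gm measurable_cong_sets[OF ProbD(2)[OF nu] refl] by blast
    have "emeasure (distr \<mu> borel f) {c} = emeasure (distr \<nu> borel g) {c}" using law by simp
    then show ?thesis unfolding R_def S_def
      using emeasure_distr[OF fm', of "{c}"] emeasure_distr[OF gm', of "{c}"] ProbD[OF mu] ProbD[OF nu]
      by simp
  qed
  have Kc_prob: "Kc c \<in> space (prob_algebra (borel_of G))" for c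
  proof (cases "emeasure \<nu> (S c) \<noteq> 0")
    case True
    then show ?thesis unfolding Kc_def space_prob_algebra
      using ProbD[OF nu] by (auto intro!: prob_space_uniform_measure)
  next
    case False
    then show ?thesis unfolding Kc_def space_prob_algebra using ProbD[OF nu] by auto
  qed
  have f_count: "f \<in> borel_of F \<rightarrow>\<^sub>M count_space U"
    unfolding measurable_count_space_eq2[OF U(1)]
    using U(2) R_sets unfolding R_def by auto
  have K_meas: "K \<in> borel_of F \<rightarrow>\<^sub>M prob_algebra (borel_of G)"
    unfolding K_def
    apply (rule measurable_compose_countable'[where f="\<lambda>i x. Kc i" and g=f, OF _ f_count])
    using U(1) Kc_prob by (auto intro: countable_finite)
  then have K_kernel: "K \<in> kernel F G" unfolding kernel_def .
  have bind_formula: "emeasure (lam \<bind> K) A = (\<Sum>c\<in>U. emeasure (Kc c) A * emeasure lam (R c))"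
    if lam: "lam \<in> Prob F" and A: "A \<in> sets (borel_of G)" for lam A
  proof -
    have "emeasure (lam \<bind> K) A = (\<integral>\<^sup>+x. emeasure (K x) A \<partial>lam)"
      using lam K_meas A unfolding Prob_def by (rule emeasure_bind_prob_algebra)
    also have "\<dots> = (\<integral>\<^sup>+x. (\<Sum>c\<in>U. emeasure (Kc c) A * indicator (R c) x) \<partial>lam)"
    proof (rule nn_integral_cong)
      fix x assume x: "x \<in> space lam"
      then have x': "x \<in> topspace F" using ProbD[OF lam] by simp
      then have fx: "f x \<in> U" using U(2) by auto
      have "(\<Sum>c\<in>U. emeasure (Kc c) A * indicator (R c) x) = (\<Sum>c\<in>U. if c = f x then emeasure (Kc c) A else 0)"
        using x' by (intro sum.cong) (auto simp: indicator_def R_def)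
      also have "\<dots> = emeasure (K x) A" using fx U(1) by (simp add: K_def)
      finally show "emeasure (K x) A = (\<Sum>c\<in>U. emeasure (Kc c) A * indicator (R c) x)" by simp
    qed
    also have "\<dots> = (\<Sum>c\<in>U. emeasure (Kc c) A * emeasure lam (R c))"
      using R_sets ProbD[OF lam]
      by (subst nn_integral_sum) (auto intro!: sum.cong nn_integral_cmult_indicator)
    finally show ?thesis .
  qed
  have S_sub: "S c \<subseteq> topspace G" for c unfolding S_def by auto
  have bind_nu: "kcomp \<mu> K = \<nu>"
    unfolding kcomp_def
  proof (rule measure_eqI)
    show "sets (\<mu> \<bind> K) = sets \<nu>"
      using mu K_meas ProbD[OF nu] unfolding Prob_def by (simp add: sets_bind')
    fix A assume "A \<in> sets (\<mu> \<bind> K)"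
    then have A: "A \<in> sets (borel_of G)"
      using mu K_meas unfolding Prob_def by (simp add: sets_bind')
    have tm: "emeasure (Kc c) A * emeasure \<mu> (R c) = emeasure \<nu> (S c \<inter> A)" for c
    proof (cases "emeasure \<nu> (S c) = 0")
      case True
      have "emeasure \<nu> (S c \<inter> A) \<le> emeasure \<nu> (S c)"
        using S_sets ProbD[OF nu] by (intro emeasure_mono) auto
      then show ?thesis using True pR by simp
    next
      case False
      have "emeasure (Kc c) A * emeasure \<mu> (R c) = emeasure \<nu> (S c \<inter> A) / emeasure \<nu> (S c) * emeasure \<nu> (S c)"
        using False S_sets A ProbD[OF nu] pR by (simp add: Kc_def)
      also have "\<dots> = emeasure \<nu> (S c \<inter> A)"
        using False by (simp add: ennreal_divide_times ennreal_divide_self nu.emeasure_finite less_top[symmetric])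
      finally show ?thesis .
    qed
    have "emeasure (\<mu> \<bind> K) A = (\<Sum>c\<in>U. emeasure \<nu> (S c \<inter> A))"
      using bind_formula[OF mu A] tm by simp
    also have "\<dots> = emeasure \<nu> (\<Union>c\<in>U. S c \<inter> A)"
      using S_sets A ProbD[OF nu] U(1)
      by (intro sum_emeasure) (auto simp: disjoint_family_on_def S_def)
    also have "(\<Union>c\<in>U. S c \<inter> A) = A"
      using U(3) sets.sets_into_space[OF A] unfolding S_def by auto
    finally show "emeasure (\<mu> \<bind> K) A = emeasure \<nu> A" .
  qed
  show ?thesis
    unfolding rho_def[of \<alpha> F \<mu> f]
  proof (rule SUP_least)
    fix \<nu>' assume nu': "\<nu>' \<in> Prob F"
    show "ereal (integral\<^sup>L \<nu>' f) - enn2ereal (\<alpha> F \<nu>' \<mu>) \<le> rho \<alpha> G \<nu> g"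
    proof (cases "\<alpha> F \<nu>' \<mu> = \<infinity>")
      case True then show ?thesis by simp
    next
      case False
      interpret nu': prob_space \<nu>' using ProbD[OF nu'] by simp
      have acc: "absolutely_continuous \<mu> \<nu>'" using ac[OF nu'] False by blast
      have null: "emeasure \<nu>' (R c) = 0" if "emeasure \<mu> (R c) = 0" for c
      proof -
        have "R c \<in> null_sets \<mu>" using that R_sets ProbD[OF mu] by auto
        then show ?thesis using acc unfolding absolutely_continuous_def by auto
      qed
      define \<eta> where "\<eta> = \<nu>' \<bind> K"
      have eta: "\<eta> \<in> Prob G"
        unfolding \<eta>_def Prob_def space_prob_algebra
        using nu' K_meas unfolding Prob_def by (simp add: sets_bind' prob_space_bind')
      interpret eta: prob_space \<eta> using ProbD[OF eta] by simp
      have etaS: "emeasure \<eta> (S d) = emeasure \<nu>' (R d)" if d: "d \<in> U" for d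
      proof -
        have tm: "emeasure (Kc c) (S d) * emeasure \<nu>' (R c) = (if c = d then emeasure \<nu>' (R d) else 0)" for c
        proof (cases "emeasure \<nu> (S c) = 0")
          case True
          then show ?thesis using null[of c] pR[of c] by auto
        next
          case False
          have "emeasure (Kc c) (S d) = emeasure \<nu> (S c \<inter> S d) / emeasure \<nu> (S c)"
            using False S_sets ProbD[OF nu] by (simp add: Kc_def)
          also have "S c \<inter> S d = (if c = d then S c else {})" by (auto simp: S_def)
          also have "emeasure \<nu> (if c = d then S c else {}) / emeasure \<nu> (S c) = (if c = d then 1 else 0)"
            using False by (auto simp: S_def nu.emeasure_finite ennreal_divide_self less_top[symmetric])
          finally show ?thesis by simp
        qed
        have "emeasure \<eta> (S d) = (\<Sum>c\<in>U. emeasure (Kc c) (S d) * emeasure \<nu>' (R c))"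
          unfolding \<eta>_def using bind_formula[OF nu' S_sets] .
        also have "\<dots> = emeasure \<nu>' (R d)" using tm d U(1) by simp
        finally show ?thesis .
      qed
      have gm_eta: "g \<in> borel_measurable \<eta>" using gm measurable_cong_sets[OF ProbD(2)[OF eta] refl] by blast
      have fm_nu': "f \<in> borel_measurable \<nu>'" using fm measurable_cong_sets[OF ProbD(2)[OF nu'] refl] by blast
      have "integral\<^sup>L \<eta> g = (\<Sum>c\<in>U. c * measure \<eta> (g -` {c} \<inter> space \<eta>))"
        using gm_eta U ProbD[OF eta] by (intro simple_integral) (auto intro: eta.finite_measure_axioms)
      also have "\<dots> = (\<Sum>c\<in>U. c * measure \<nu>' (f -` {c} \<inter> space \<nu>'))"
        using etaS ProbD[OF eta] ProbD[OF nu'] by (intro sum.cong refl) (simp add: measure_def S_def R_def)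
      also have "\<dots> = integral\<^sup>L \<nu>' f"
        using fm_nu' U ProbD[OF nu'] by (intro simple_integral[symmetric]) (auto intro: nu'.finite_measure_axioms)
      finally have int_eq: "integral\<^sup>L \<eta> g = integral\<^sup>L \<nu>' f" .
      have le: "\<alpha> G \<eta> \<nu> \<le> \<alpha> F \<nu>' \<mu>"
        using dpi[OF nu' K_kernel] bind_nu unfolding \<eta>_def kcomp_def by simp
      have "ereal (integral\<^sup>L \<nu>' f) - enn2ereal (\<alpha> F \<nu>' \<mu>) \<le> ereal (integral\<^sup>L \<eta> g) - enn2ereal (\<alpha> G \<eta> \<nu>)"
        using le False int_eq
        by (cases rule: term_cases[of "\<alpha> F \<nu>' \<mu>" "integral\<^sup>L \<nu>' f"];
            cases rule: term_cases[of "\<alpha> G \<eta> \<nu>" "integral\<^sup>L \<eta> g"]) (auto simp: top_unique)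
      also have "\<dots> \<le> rho \<alpha> G \<nu> g" by (rule rho_upper[OF eta])
      finally show ?thesis .
    qed
  qed
qed


lemma bdd_borel_add_const:
  assumes "f \<in> bdd_borel X"
  shows "(\<lambda>x. f x + c) \<in> bdd_borel X"
proof -
  obtain B where B: "\<forall>x\<in>topspace X. \<bar>f x\<bar> \<le> B" using bdd_borelD[OF assms] by auto
  have "\<forall>x\<in>topspace X. norm (f x + c) \<le> B + \<bar>c\<bar>" using B by (auto intro: order_trans[OF abs_triangle_ineq])
  then show ?thesis using bdd_borelD(1)[OF assms] unfolding bdd_borel_def bounded_iff by auto
qed

lemma bdd_borel_lin:
  assumes "f \<in> bdd_borel X" "g \<in> bdd_borel X"
  shows "(\<lambda>x. a * f x + b * g x) \<in> bdd_borel X"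
proof -
  obtain B where B: "\<forall>x\<in>topspace X. \<bar>f x\<bar> \<le> B" using bdd_borelD[OF assms(1)] by auto
  obtain C where C: "\<forall>x\<in>topspace X. \<bar>g x\<bar> \<le> C" using bdd_borelD[OF assms(2)] by auto
  have "\<bar>a * f x + b * g x\<bar> \<le> \<bar>a\<bar> * B + \<bar>b\<bar> * C" if "x \<in> topspace X" for x
  proof -
    have "\<bar>a * f x + b * g x\<bar> \<le> \<bar>a\<bar> * \<bar>f x\<bar> + \<bar>b\<bar> * \<bar>g x\<bar>"
      by (metis abs_mult abs_triangle_ineq)
    also have "\<dots> \<le> \<bar>a\<bar> * B + \<bar>b\<bar> * C"
      using B C that by (intro add_mono mult_left_mono) auto
    finally show ?thesis .
  qed
  then show ?thesis using bdd_borelD(1)[OF assms(1)] bdd_borelD(1)[OF assms(2)]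
    unfolding bdd_borel_def bounded_iff by auto
qed

lemma integral_le_shift:
  assumes "f \<in> bdd_borel X" "g \<in> bdd_borel X" "\<nu> \<in> Prob X" "\<And>x. x \<in> topspace X \<Longrightarrow> f x \<le> g x + c"
  shows "integral\<^sup>L \<nu> f \<le> integral\<^sup>L \<nu> g + c"
proof -
  interpret prob_space \<nu> using ProbD[OF assms(3)] by simp
  have ig: "integrable \<nu> g" using bdd_integrable[OF assms(2,3)] .
  have "integral\<^sup>L \<nu> f \<le> integral\<^sup>L \<nu> (\<lambda>x. g x + c)"
    using assms(4) ProbD[OF assms(3)] bdd_integrable[OF assms(1,3)] ig by (intro integral_mono) auto
  also have "\<dots> = integral\<^sup>L \<nu> g + c" using ig by (simp add: prob_space)
  finally show ?thesis .
qed

lemma law_le: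
  fixes \<alpha> :: "'a topology \<Rightarrow> 'a measure \<Rightarrow> 'a measure \<Rightarrow> ennreal"
  assumes mu: "\<mu> \<in> Prob F" and nu: "\<nu> \<in> Prob G"
    and ac: "\<And>\<nu>'. \<nu>' \<in> Prob F \<Longrightarrow> \<not> absolutely_continuous \<mu> \<nu>' \<Longrightarrow> \<alpha> F \<nu>' \<mu> = \<infinity>"
    and dpi: "\<And>\<nu>' K. \<nu>' \<in> Prob F \<Longrightarrow> K \<in> kernel F G \<Longrightarrow> \<alpha> G (kcomp \<nu>' K) (kcomp \<mu> K) \<le> \<alpha> F \<nu>' \<mu>"
    and f: "f \<in> bdd_borel F" and g: "g \<in> bdd_borel G"
    and law: "distr \<mu> borel f = distr \<nu> borel g"
  shows "rho \<alpha> F \<mu> f \<le> rho \<alpha> G \<nu> g"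
proof (rule ereal_le_epsilon2)
  fix e :: real assume e: "0 < e"
  define \<phi> where "\<phi> t = e * real_of_int \<lfloor>t / e\<rfloor>" for t
  have phi_le: "\<phi> t \<le> t" for t
  proof -
    have "real_of_int \<lfloor>t / e\<rfloor> \<le> t / e" by simp
    then have "e * real_of_int \<lfloor>t / e\<rfloor> \<le> e * (t / e)" using e by (intro mult_left_mono) auto
    then show ?thesis unfolding \<phi>_def using e by simp
  qed
  have phi_ge: "t \<le> \<phi> t + e" for t
  proof -
    have "t / e \<le> real_of_int \<lfloor>t / e\<rfloor> + 1" by linarith
    then have "e * (t / e) \<le> e * (real_of_int \<lfloor>t / e\<rfloor> + 1)" using e by (intro mult_left_mono) auto
    then show ?thesis unfolding \<phi>_def using e by (simp add: distrib_left)
  qed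
  have phi_meas: "\<phi> \<in> borel_measurable borel" unfolding \<phi>_def using e by measurable
  obtain B1 where B1: "\<forall>x\<in>topspace F. \<bar>f x\<bar> \<le> B1" using bdd_borelD[OF f] by auto
  obtain B2 where B2: "\<forall>x\<in>topspace G. \<bar>g x\<bar> \<le> B2" using bdd_borelD[OF g] by auto
  define B where "B = max B1 B2"
  define U where "U = (\<lambda>k. e * real_of_int k) ` {\<lfloor>-B / e\<rfloor>..\<lfloor>B / e\<rfloor>}"
  have U_fin: "finite U" unfolding U_def by simp
  have inU: "\<phi> t \<in> U" if "\<bar>t\<bar> \<le> B" for t
  proof -
    have "-B \<le> t" "t \<le> B" using that by auto
    then have "-B / e \<le> t / e" "t / e \<le> B / e" using divide_right_mono[of "-B" t e] divide_right_mono[of t B e] e by auto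
    then have "\<lfloor>t / e\<rfloor> \<in> {\<lfloor>-B / e\<rfloor>..\<lfloor>B / e\<rfloor>}" by (auto intro: floor_mono)
    then show ?thesis unfolding U_def \<phi>_def by auto
  qed
  have fm: "f \<in> borel_measurable (borel_of F)" using bdd_borelD[OF f] by simp
  have gm: "g \<in> borel_measurable (borel_of G)" using bdd_borelD[OF g] by simp
  have fphi: "(\<lambda>x. \<phi> (f x)) \<in> bdd_borel F"
  proof -
    have "\<forall>x\<in>topspace F. norm (\<phi> (f x)) \<le> B1 + e"
      using B1 phi_le phi_ge by (smt (verit, ccfv_SIG) real_norm_def)
    then show ?thesis using measurable_compose[OF fm phi_meas] unfolding bdd_borel_def bounded_iff
      by (auto simp: o_def)
  qed
  have gphi: "(\<lambda>x. \<phi> (g x)) \<in> bdd_borel G"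
  proof -
    have "\<forall>x\<in>topspace G. norm (\<phi> (g x)) \<le> B2 + e"
      using B2 phi_le phi_ge by (smt (verit, ccfv_SIG) real_norm_def)
    then show ?thesis using measurable_compose[OF gm phi_meas] unfolding bdd_borel_def bounded_iff
      by (auto simp: o_def)
  qed
  have fm': "f \<in> \<mu> \<rightarrow>\<^sub>M borel" using fm measurable_cong_sets[OF ProbD(2)[OF mu] refl] by blast
  have gm': "g \<in> \<nu> \<rightarrow>\<^sub>M borel" using gm measurable_cong_sets[OF ProbD(2)[OF nu] refl] by blast
  have law': "distr \<mu> borel (\<lambda>x. \<phi> (f x)) = distr \<nu> borel (\<lambda>x. \<phi> (g x))"
    using distr_distr[OF phi_meas fm'] distr_distr[OF phi_meas gm'] law by (simp add: o_def)
  have step1: "rho \<alpha> F \<mu> f \<le> rho \<alpha> F \<mu> (\<lambda>x. \<phi> (f x)) + ereal e"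
    by (rule rho_mono_gen, rule integral_le_shift[OF f fphi]) (auto intro: phi_ge)
  have step2: "rho \<alpha> F \<mu> (\<lambda>x. \<phi> (f x)) \<le> rho \<alpha> G \<nu> (\<lambda>x. \<phi> (g x))"
  proof (rule simple_law_le[where U=U and \<alpha>=\<alpha>, OF mu nu ac dpi])
    show "(\<lambda>x. \<phi> (f x)) \<in> borel_measurable (borel_of F)" using bdd_borelD(1)[OF fphi] .
    show "(\<lambda>x. \<phi> (g x)) \<in> borel_measurable (borel_of G)" using bdd_borelD(1)[OF gphi] .
    show "(\<lambda>x. \<phi> (f x)) ` topspace F \<subseteq> U" using B1 inU unfolding B_def by force
    show "(\<lambda>x. \<phi> (g x)) ` topspace G \<subseteq> U" using B2 inU unfolding B_def by force
  qed (use U_fin law' in auto)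
  have step3: "rho \<alpha> G \<nu> (\<lambda>x. \<phi> (g x)) \<le> rho \<alpha> G \<nu> g + ereal 0"
    by (rule rho_mono_gen, rule integral_le_shift[OF gphi g]) (auto intro: phi_le)
  have "rho \<alpha> F \<mu> f \<le> rho \<alpha> G \<nu> (\<lambda>x. \<phi> (g x)) + ereal e"
    using step1 step2 by (meson add_right_mono order_trans)
  also have "\<dots> \<le> rho \<alpha> G \<nu> g + ereal e"
    using step3 by (intro add_right_mono) simp
  finally show "rho \<alpha> F \<mu> f \<le> rho \<alpha> G \<nu> g + ereal e" .
qed


theorem theorem2p7:
  fixes \<alpha> :: "real topology \<Rightarrow> real measure \<Rightarrow> real measure \<Rightarrow> ennreal"
  assumes refl: "\<And>E \<mu>. Polish_space E \<Longrightarrow> \<mu> \<in> Prob E \<Longrightarrow> \<alpha> E \<mu> \<mu> = 0"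
    and ac: "\<And>E \<mu> \<nu>. Polish_space E \<Longrightarrow> \<mu> \<in> Prob E \<Longrightarrow> \<nu> \<in> Prob E \<Longrightarrow>
               \<not> absolutely_continuous \<mu> \<nu> \<Longrightarrow> \<alpha> E \<nu> \<mu> = \<infinity>"
    and dpi: "\<And>E F \<mu> \<nu> K. Polish_space E \<Longrightarrow> Polish_space F \<Longrightarrow> \<mu> \<in> Prob E \<Longrightarrow> \<nu> \<in> Prob E \<Longrightarrow>
               K \<in> kernel E F \<Longrightarrow> \<alpha> F (kcomp \<nu> K) (kcomp \<mu> K) \<le> \<alpha> E \<nu> \<mu>"
  shows "(\<forall>E \<mu>. Polish_space E \<and> \<mu> \<in> Prob E \<longrightarrow>
            risk_measure E \<mu> (rho \<alpha> E \<mu>) \<and> law_invariant E \<mu> (rho \<alpha> E \<mu>)) \<and>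
         (\<forall>F G \<mu> \<nu> f g. Polish_space F \<and> Polish_space G \<and> \<mu> \<in> Prob F \<and> \<nu> \<in> Prob G \<and>
            f \<in> bdd_borel F \<and> g \<in> bdd_borel G \<and> distr \<mu> borel f = distr \<nu> borel g \<longrightarrow>
            rho \<alpha> F \<mu> f = rho \<alpha> G \<nu> g)"
proof -
  have part2: "rho \<alpha> F \<mu> f = rho \<alpha> G \<nu> g"
    if PF: "Polish_space F" and PG: "Polish_space G" and mu: "\<mu> \<in> Prob F" and nu: "\<nu> \<in> Prob G"
      and f: "f \<in> bdd_borel F" and g: "g \<in> bdd_borel G" and law: "distr \<mu> borel f = distr \<nu> borel g"
    for F G \<mu> \<nu> f g
  proof (rule antisym)
    show "rho \<alpha> F \<mu> f \<le> rho \<alpha> G \<nu> g"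
      by (rule law_le[where \<alpha>=\<alpha>, OF mu nu ac[OF PF mu] dpi[OF PF PG mu] f g law])
    show "rho \<alpha> G \<nu> g \<le> rho \<alpha> F \<mu> f"
      by (rule law_le[where \<alpha>=\<alpha>, OF nu mu ac[OF PG nu] dpi[OF PG PF nu] g f law[symmetric]])
  qed
  have part1: "risk_measure E \<mu> (rho \<alpha> E \<mu>) \<and> law_invariant E \<mu> (rho \<alpha> E \<mu>)"
    if PE: "Polish_space E" and mu: "\<mu> \<in> Prob E" for E \<mu>
  proof -
    have r0: "\<alpha> E \<mu> \<mu> = 0" using refl[OF PE mu] .
    have fin: "\<exists>r. rho \<alpha> E \<mu> f = ereal r" if "f \<in> bdd_borel E" for f
      using rho_bounds[where \<alpha>=\<alpha>, OF mu r0 that] .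
    have li: "law_invariant E \<mu> (rho \<alpha> E \<mu>)"
      unfolding law_invariant_def using part2[OF PE PE mu mu] by blast
    have mono: "rho \<alpha> E \<mu> f \<le> rho \<alpha> E \<mu> g"
      if f: "f \<in> bdd_borel E" and g: "g \<in> bdd_borel E" and ae: "AE x in \<mu>. f x \<le> g x" for f g
    proof -
      have "rho \<alpha> E \<mu> f \<le> rho \<alpha> E \<mu> g + ereal 0"
      proof (rule rho_mono_gen)
        fix \<nu>' assume nu': "\<nu>' \<in> Prob E" and fin': "\<alpha> E \<nu>' \<mu> \<noteq> \<infinity>"
        have acc: "absolutely_continuous \<mu> \<nu>'" using ac[OF PE mu nu'] fin' by blast
        have "AE x in \<nu>'. f x \<le> g x"
          using absolutely_continuous_AE[OF _ acc ae] ProbD(2)[OF nu'] ProbD(2)[OF mu] by simp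
        then have "integral\<^sup>L \<nu>' f \<le> integral\<^sup>L \<nu>' g"
          using bdd_integrable[OF f nu'] bdd_integrable[OF g nu'] by (intro integral_mono_AE) auto
        then show "integral\<^sup>L \<nu>' f \<le> integral\<^sup>L \<nu>' g + 0" by simp
      qed
      then show ?thesis by simp
    qed
    have cash: "rho \<alpha> E \<mu> (\<lambda>x. f x + c) = rho \<alpha> E \<mu> f + ereal c"
      if f: "f \<in> bdd_borel E" for f c
    proof -
      have fc: "(\<lambda>x. f x + c) \<in> bdd_borel E" using bdd_borel_add_const[OF f] .
      have a: "rho \<alpha> E \<mu> (\<lambda>x. f x + c) \<le> rho \<alpha> E \<mu> f + ereal c"
        by (rule rho_mono_gen, rule integral_le_shift[OF fc f]) auto
      have b: "rho \<alpha> E \<mu> f \<le> rho \<alpha> E \<mu> (\<lambda>x. f x + c) + ereal (-c)"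
        by (rule rho_mono_gen, rule integral_le_shift[OF f fc]) auto
      obtain r1 where r1: "rho \<alpha> E \<mu> f = ereal r1" using fin[OF f] by auto
      obtain r2 where r2: "rho \<alpha> E \<mu> (\<lambda>x. f x + c) = ereal r2" using fin[OF fc] by auto
      show ?thesis using a b unfolding r1 r2 by simp
    qed
    have zero_bdd: "(\<lambda>x. 0::real) \<in> bdd_borel E" unfolding bdd_borel_def bounded_iff by auto
    have norm0: "rho \<alpha> E \<mu> (\<lambda>x. 0) = 0"
    proof (rule antisym)
      show "rho \<alpha> E \<mu> (\<lambda>x. 0) \<le> 0"
        unfolding rho_def
      proof (rule SUP_least)
        fix \<nu>' assume "\<nu>' \<in> Prob E"
        show "ereal (integral\<^sup>L \<nu>' (\<lambda>x. 0)) - enn2ereal (\<alpha> E \<nu>' \<mu>) \<le> 0"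
          by (cases rule: term_cases[of "\<alpha> E \<nu>' \<mu>" "integral\<^sup>L \<nu>' (\<lambda>x. 0)"]) auto
      qed
      show "0 \<le> rho \<alpha> E \<mu> (\<lambda>x. 0)"
        using rho_upper[OF mu, where \<alpha>=\<alpha> and f="\<lambda>x. 0" and \<mu>=\<mu>] r0 by (simp add: zero_ennreal.rep_eq zero_ereal_def)
    qed
    have convex: "rho \<alpha> E \<mu> (\<lambda>x. t * f x + (1 - t) * g x) \<le> ereal t * rho \<alpha> E \<mu> f + ereal (1 - t) * rho \<alpha> E \<mu> g"
      if f: "f \<in> bdd_borel E" and g: "g \<in> bdd_borel E" and t: "0 \<le> t" "t \<le> 1" for f g t
    proof -
      obtain rf where rf: "rho \<alpha> E \<mu> f = ereal rf" using fin[OF f] by auto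
      obtain rg where rg: "rho \<alpha> E \<mu> g = ereal rg" using fin[OF g] by auto
      show ?thesis
        unfolding rho_def[of \<alpha> E \<mu> "\<lambda>x. t * f x + (1 - t) * g x"]
      proof (rule SUP_least)
        fix \<nu>' assume nu': "\<nu>' \<in> Prob E"
        have uf: "ereal (integral\<^sup>L \<nu>' f) - enn2ereal (\<alpha> E \<nu>' \<mu>) \<le> ereal rf"
          using rho_upper[OF nu', where \<alpha>=\<alpha> and f=f and \<mu>=\<mu>] rf by simp
        have ug: "ereal (integral\<^sup>L \<nu>' g) - enn2ereal (\<alpha> E \<nu>' \<mu>) \<le> ereal rg"
          using rho_upper[OF nu', where \<alpha>=\<alpha> and f=g and \<mu>=\<mu>] rg by simp
        have int: "integral\<^sup>L \<nu>' (\<lambda>x. t * f x + (1 - t) * g x) = t * integral\<^sup>L \<nu>' f + (1 - t) * integral\<^sup>L \<nu>' g"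
          using bdd_integrable[OF f nu'] bdd_integrable[OF g nu'] by simp
        show "ereal (integral\<^sup>L \<nu>' (\<lambda>x. t * f x + (1 - t) * g x)) - enn2ereal (\<alpha> E \<nu>' \<mu>)
              \<le> ereal t * rho \<alpha> E \<mu> f + ereal (1 - t) * rho \<alpha> E \<mu> g"
        proof (cases rule: term_cases[of "\<alpha> E \<nu>' \<mu>" "integral\<^sup>L \<nu>' (\<lambda>x. t * f x + (1 - t) * g x)"])
          case 1 then show ?thesis by simp
        next
          case (2 b)
          have a1: "integral\<^sup>L \<nu>' f - b \<le> rf" using uf 2 by (simp add: enn2ereal_ennreal)
          have a2: "integral\<^sup>L \<nu>' g - b \<le> rg" using ug 2 by (simp add: enn2ereal_ennreal)
          have "t * (integral\<^sup>L \<nu>' f - b) + (1 - t) * (integral\<^sup>L \<nu>' g - b) \<le> t * rf + (1 - t) * rg"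
            using a1 a2 t by (intro add_mono mult_left_mono) auto
          then have "integral\<^sup>L \<nu>' (\<lambda>x. t * f x + (1 - t) * g x) - b \<le> t * rf + (1 - t) * rg"
            unfolding int by (simp add: algebra_simps)
          then show ?thesis using 2 unfolding rf rg by simp
        qed
      qed
    qed
    have rm: "risk_measure E \<mu> (rho \<alpha> E \<mu>)"
      unfolding risk_measure_def
      using fin mono cash norm0 convex by fastforce
    show ?thesis using rm li by simp
  qed
  show ?thesis using part1 part2 by blast
qed

end
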